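(* Assume $\Phi$ is convex. Let $\emptyset\neq S\subseteq\mathbb{S}\cap\{x\in\mathbb{R}^n\mid\langle x,u\rangle\ge\alpha\}$ for some $u\in\mathbb{R}^n$ with $\|u\|=1$ and some $\alpha>0$. Then $S$ is hull-addible and $$\operatorname{cl}(\operatorname{sco}S)=\bigcap\{C\subseteq\mathbb{S}\mid C\text{ nonempty, closed and s-convex},\ S\subseteq C\}.$$ Consequently, $\operatorname{cl}(\operatorname{sco}S)$ is the smallest closed s-convex subset of $\mathbb{S}$ containing $S$.
   Context: Standing setting: $n\ge 2$; $\mathbb{R}^n$ carries the usual inner product $\langle\cdot,\cdot\rangle$ and Euclidean norm $\|\cdot\|$; $o$ denotes the zero vector. $\Phi:\mathbb{R}^n\to\mathbb{R}_+:=[0,\infty)$ is a continuous function with $\Phi(tx)=t\Phi(x)$ for all $x\in\mathbb{R}^n$, $t\ge 0$, and $\Phi(x)=0$ iff $x=o$. Set $\mathbb{S}:=\{x\in\mathbb{R}^n\mid \Phi(x)=1\}$ (with the topology induced from $\mathbb{R}^n$), and $\rho:\mathbb{R}^n\to\{o\}\cup\mathbb{S}$, $\rho(x):=x/\Phi(x)$ for $x\neq o$, $\rho(o):=o$. For $x,y\in\mathbb{S}$, $\lambda\in[0,1]$, $\lambda x+_s(1-\lambda)y:=\rho(\lambda x+(1-\lambda)y)$. A nonempty set $S\subseteq\mathbb{S}$ is called s-convex if $\lambda x+_s(1-\lambda)y\in S$ for all $x,y\in S$ and $\lambda\in[0,1]$. A nonempty set $S\subseteq\mathbb{S}$ is hull-addible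 if $o\notin\operatorname{conv}S$; for such $S$, $\operatorname{sco}S:=\rho(\operatorname{conv}S)$. $\operatorname{cl}$ denotes closure in $\mathbb{R}^n$. *)

theory Defs
  imports "HOL-Analysis.Analysis"
begin

definition gauge_fun :: "('a::euclidean_space \<Rightarrow> real) \<Rightarrow> bool" where
  "gauge_fun \<Phi> \<longleftrightarrow> continuous_on UNIV \<Phi> \<and> (\<forall>x. \<Phi> x \<ge> 0)
     \<and> (\<forall>x t. t \<ge> 0 \<longrightarrow> \<Phi> (t *\<^sub>R x) = t * \<Phi> x)
     \<and> (\<forall>x. \<Phi> x = 0 \<longleftrightarrow> x = 0)"

definition gsphere :: "('a::euclidean_space \<Rightarrow> real) \<Rightarrow> 'a set" where
  "gsphere \<Phi> = {x. \<Phi> x = 1}"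

definition grho :: "('a::euclidean_space \<Rightarrow> real) \<Rightarrow> 'a \<Rightarrow> 'a" where
  "grho \<Phi> x = (if x = 0 then 0 else (1 / \<Phi> x) *\<^sub>R x)"

definition s_comb :: "('a::euclidean_space \<Rightarrow> real) \<Rightarrow> real \<Rightarrow> 'a \<Rightarrow> 'a \<Rightarrow> 'a" where
  "s_comb \<Phi> l x y = grho \<Phi> (l *\<^sub>R x + (1 - l) *\<^sub>R y)"

definition s_convex :: "('a::euclidean_space \<Rightarrow> real) \<Rightarrow> 'a set \<Rightarrow> bool" where
  "s_convex \<Phi> S \<longleftrightarrow> S \<noteq> {} \<and> S \<subseteq> gsphere \<Phi> \<and>
     (\<forall>x\<in>S. \<forall>y\<in>S. \<forall>l\<in>{0..1}. s_comb \<Phi> l x y \<in> S)"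

definition hull_addible :: "('a::euclidean_space \<Rightarrow> real) \<Rightarrow> 'a set \<Rightarrow> bool" where
  "hull_addible \<Phi> S \<longleftrightarrow> S \<noteq> {} \<and> S \<subseteq> gsphere \<Phi> \<and> 0 \<notin> convex hull S"

definition sco :: "('a::euclidean_space \<Rightarrow> real) \<Rightarrow> 'a set \<Rightarrow> 'a set" where
  "sco \<Phi> S = grho \<Phi> ` (convex hull S)"

end

theory Submission
  imports Defs
begin

lemma g_pos: "gauge_fun \<Phi> \<Longrightarrow> z \<noteq> 0 \<Longrightarrow> \<Phi> z > 0"
  unfolding gauge_fun_def by (metis less_eq_real_def)

lemma g_hom: "gauge_fun \<Phi> \<Longrightarrow> t \<ge> 0 \<Longrightarrow> \<Phi> (t *\<^sub>R x) = t * \<Phi> x"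
  unfolding gauge_fun_def by blast

lemma g_zero: "gauge_fun \<Phi> \<Longrightarrow> \<Phi> 0 = 0"
  unfolding gauge_fun_def by blast

lemma rho_scale:
  assumes g: "gauge_fun \<Phi>" and t: "t > 0"
  shows "grho \<Phi> (t *\<^sub>R z) = grho \<Phi> z"
proof (cases "z = 0")
  case True then show ?thesis by simp
next
  case False
  then have "t *\<^sub>R z \<noteq> 0" using t by simp
  moreover have "\<Phi> (t *\<^sub>R z) = t * \<Phi> z" using g_hom[OF g] t by simp
  ultimately show ?thesis using False t unfolding grho_def by simp
qed

lemma rho_sphere:
  assumes g: "gauge_fun \<Phi>" and z: "z \<noteq> 0"
  shows "grho \<Phi> z \<in> gsphere \<Phi>"
proof -
  have p: "\<Phi> z > 0" using g_pos[OF g z] .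
  have "\<Phi> ((1 / \<Phi> z) *\<^sub>R z) = (1 / \<Phi> z) * \<Phi> z" using g_hom[OF g] p by simp
  then show ?thesis using z p unfolding grho_def gsphere_def by simp
qed

lemma rho_fix:
  assumes g: "gauge_fun \<Phi>" and z: "z \<in> gsphere \<Phi>"
  shows "grho \<Phi> z = z"
proof -
  have "\<Phi> z = 1" using z unfolding gsphere_def by simp
  moreover then have "z \<noteq> 0" using g_zero[OF g] by auto
  ultimately show ?thesis unfolding grho_def by simp
qed

lemma rho_decomp:
  assumes g: "gauge_fun \<Phi>" and z: "z \<noteq> 0"
  shows "z = \<Phi> z *\<^sub>R grho \<Phi> z"
  using g_pos[OF g z] z unfolding grho_def by simp

lemma zero_not_sphere: "gauge_fun \<Phi> \<Longrightarrow> 0 \<notin> gsphere \<Phi>"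
  using g_zero[of \<Phi>] unfolding gsphere_def by auto

lemma minimal:
  assumes g: "gauge_fun \<Phi>" and C: "s_convex \<Phi> C" and S: "S \<subseteq> C"
  shows "grho \<Phi> ` (convex hull S) \<subseteq> C"
proof -
  define D where "D = {x. x \<noteq> 0 \<and> grho \<Phi> x \<in> C}"
  have Csph: "C \<subseteq> gsphere \<Phi>" using C unfolding s_convex_def by blast
  have "S \<subseteq> D"
  proof
    fix s assume "s \<in> S"
    then have "s \<in> C" "s \<in> gsphere \<Phi>" using S Csph by auto
    then show "s \<in> D" unfolding D_def using rho_fix[OF g] zero_not_sphere[OF g] by auto
  qed
  moreover have "convex D"
    unfolding convex_def
  proof (intro ballI allI impI)
    fix x y and a b :: real
    assume x: "x \<in> D" and y: "y \<in> D" and ab: "0 \<le> a" "0 \<le> b" "a + b = 1"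
    have x0: "x \<noteq> 0" and y0: "y \<noteq> 0" and xc: "grho \<Phi> x \<in> C" and yc: "grho \<Phi> y \<in> C"
      using x y unfolding D_def by auto
    have px: "\<Phi> x > 0" and py: "\<Phi> y > 0" using g_pos[OF g] x0 y0 by auto
    define p where "p = a * \<Phi> x"
    define q where "q = b * \<Phi> y"
    have p0: "p \<ge> 0" "q \<ge> 0" using ab px py unfolding p_def q_def by auto
    have pq: "p + q > 0"
    proof (cases "a = 0")
      case True then have "b = 1" using ab by simp
      then show ?thesis using True py unfolding p_def q_def by simp
    next
      case False then have "a > 0" using ab by simp
      then show ?thesis using px p0 unfolding p_def by (simp add: add_pos_nonneg)
    qed
    define w where "w = p / (p + q)"
    have w01: "w \<in> {0..1}" using p0 pq unfolding w_def by auto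
    have eq: "a *\<^sub>R x + b *\<^sub>R y = (p + q) *\<^sub>R (w *\<^sub>R grho \<Phi> x + (1 - w) *\<^sub>R grho \<Phi> y)"
    proof -
      have "1 - w = q / (p + q)" using pq unfolding w_def by (simp add: field_simps)
      then have "(p + q) *\<^sub>R (w *\<^sub>R grho \<Phi> x + (1 - w) *\<^sub>R grho \<Phi> y)
          = p *\<^sub>R grho \<Phi> x + q *\<^sub>R grho \<Phi> y"
        using pq unfolding w_def by (simp add: scaleR_add_right)
      also have "\<dots> = a *\<^sub>R x + b *\<^sub>R y"
        using rho_decomp[OF g x0] rho_decomp[OF g y0] unfolding p_def q_def
        by (metis scaleR_scaleR)
      finally show ?thesis by simp
    qed
    have sc: "s_comb \<Phi> w (grho \<Phi> x) (grho \<Phi> y) \<in> C"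
      using C xc yc w01 unfolding s_convex_def by blast
    then have ne: "w *\<^sub>R grho \<Phi> x + (1 - w) *\<^sub>R grho \<Phi> y \<noteq> 0"
      using Csph zero_not_sphere[OF g] unfolding s_comb_def grho_def by auto
    have "a *\<^sub>R x + b *\<^sub>R y \<noteq> 0" using eq ne pq by simp
    moreover have "grho \<Phi> (a *\<^sub>R x + b *\<^sub>R y) \<in> C"
      using sc rho_scale[OF g pq] eq unfolding s_comb_def by simp
    ultimately show "a *\<^sub>R x + b *\<^sub>R y \<in> D" unfolding D_def by simp
  qed
  ultimately have "convex hull S \<subseteq> D" by (rule hull_minimal)
  then show ?thesis unfolding D_def by auto
qed



lemma comb_in:
  assumes g: "gauge_fun \<Phi>" and K: "convex K" "0 \<notin> K" and k: "k \<in> K" "k' \<in> K"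
    and l: "l \<in> {0..1}" and ne: "l *\<^sub>R grho \<Phi> k + (1 - l) *\<^sub>R grho \<Phi> k' \<noteq> 0"
  shows "grho \<Phi> (l *\<^sub>R grho \<Phi> k + (1 - l) *\<^sub>R grho \<Phi> k') \<in> grho \<Phi> ` K"
proof -
  have k0: "k \<noteq> 0" "k' \<noteq> 0" using K k by auto
  have px: "\<Phi> k > 0" and py: "\<Phi> k' > 0" using g_pos[OF g] k0 by auto
  define p where "p = l / \<Phi> k"
  define q where "q = (1 - l) / \<Phi> k'"
  have p0: "p \<ge> 0" "q \<ge> 0" using l px py unfolding p_def q_def by auto
  have pq: "p + q > 0"
  proof (cases "l = 0")
    case True then show ?thesis using py unfolding p_def q_def by simp
  next
    case False then have "l > 0" using l by simp
    then show ?thesis using px p0 unfolding p_def by (simp add: add_pos_nonneg)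
  qed
  define w where "w = p / (p + q)"
  have w01: "0 \<le> w" "w \<le> 1" using p0 pq unfolding w_def by auto
  have eq: "l *\<^sub>R grho \<Phi> k + (1 - l) *\<^sub>R grho \<Phi> k' = (p + q) *\<^sub>R (w *\<^sub>R k + (1 - w) *\<^sub>R k')"
  proof -
    have "1 - w = q / (p + q)" using pq unfolding w_def by (simp add: field_simps)
    then have "(p + q) *\<^sub>R (w *\<^sub>R k + (1 - w) *\<^sub>R k') = p *\<^sub>R k + q *\<^sub>R k'"
      using pq unfolding w_def by (simp add: scaleR_add_right)
    also have "\<dots> = l *\<^sub>R grho \<Phi> k + (1 - l) *\<^sub>R grho \<Phi> k'"
      using k0 unfolding p_def q_def grho_def by simp
    finally show ?thesis by simp
  qed
  have "w *\<^sub>R k + (1 - w) *\<^sub>R k' \<in> K" using K(1) k w01 by (simp add: convexD)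
  then show ?thesis unfolding eq rho_scale[OF g pq] by blast
qed

theorem mainTheorem8:
  fixes \<Phi> :: "'a::euclidean_space \<Rightarrow> real" and S :: "'a set" and u :: 'a and \<alpha> :: real
  assumes "DIM('a) \<ge> 2"
    and "gauge_fun \<Phi>"
    and "convex_on UNIV \<Phi>"
    and "S \<noteq> {}"
    and "S \<subseteq> gsphere \<Phi> \<inter> {x. inner x u \<ge> \<alpha>}"
    and "norm u = 1" and "\<alpha> > 0"
  shows "hull_addible \<Phi> S
    \<and> closure (sco \<Phi> S) = \<Inter> {C. C \<subseteq> gsphere \<Phi> \<and> C \<noteq> {} \<and> closed C \<and> s_convex \<Phi> C \<and> S \<subseteq> C}
    \<and> closed (closure (sco \<Phi> S)) \<and> s_convex \<Phi> (closure (sco \<Phi> S))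
    \<and> S \<subseteq> closure (sco \<Phi> S)
    \<and> (\<forall>C. C \<subseteq> gsphere \<Phi> \<and> closed C \<and> s_convex \<Phi> C \<and> S \<subseteq> C \<longrightarrow> closure (sco \<Phi> S) \<subseteq> C)"
proof -
  note g = assms(2)
  define K where "K = convex hull S"
  define A where "A = grho \<Phi> ` K"
  define H where "H = {x. inner u x \<ge> \<alpha>}"
  have sco: "sco \<Phi> S = A" unfolding A_def K_def sco_def by simp
  have convH: "convex H" unfolding H_def by (rule convex_halfspace_ge)
  have clH: "closed H" unfolding H_def by (rule closed_halfspace_ge)
  have SH: "S \<subseteq> H" using assms(5) unfolding H_def by (auto simp: inner_commute)
  have Ssph: "S \<subseteq> gsphere \<Phi>" using assms(5) by auto
  have KH: "K \<subseteq> H" unfolding K_def using SH convH by (rule hull_minimal)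
  have H0: "0 \<notin> H" using assms(7) unfolding H_def by simp
  have K0: "0 \<notin> K" using KH H0 by auto
  have convK: "convex K" unfolding K_def by simp
  have contP: "continuous_on UNIV \<Phi>" using g unfolding gauge_fun_def by blast
  have Kle: "\<forall>x\<in>K. \<Phi> x \<le> 1"
    unfolding K_def
    by (rule convex_on_convex_hull_bound[OF convex_on_subset[OF assms(3)]])
       (use Ssph in \<open>auto simp: gsphere_def\<close>)
  have AH: "A \<subseteq> H"
  proof
    fix a assume "a \<in> A"
    then obtain k where k: "k \<in> K" "a = grho \<Phi> k" unfolding A_def by blast
    have k0: "k \<noteq> 0" using k(1) K0 by metis
    have pk: "0 < \<Phi> k" using g_pos[OF g k0] .
    have pk1: "\<Phi> k \<le> 1" using Kle k(1) by blast
    have ik: "inner u k \<ge> \<alpha>" using k(1) KH unfolding H_def by blast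
    have "inner u k * \<Phi> k \<le> inner u k"
      using pk pk1 ik assms(7) by (simp add: mult_left_le)
    then have le: "inner u k \<le> inner u k / \<Phi> k"
      using pk by (simp add: le_divide_eq)
    have "inner u a = inner u k / \<Phi> k"
      using k(2) k0 unfolding grho_def by simp
    then show "a \<in> H" unfolding H_def using le ik by simp
  qed
  have Asph: "A \<subseteq> gsphere \<Phi>"
  proof
    fix a assume "a \<in> A"
    then obtain k where k: "k \<in> K" "a = grho \<Phi> k" unfolding A_def by blast
    have "k \<noteq> 0" using k(1) K0 by metis
    then show "a \<in> gsphere \<Phi>" using rho_sphere[OF g] k(2) by simp
  qed
  have clsph: "closed (gsphere \<Phi>)" unfolding gsphere_def
    by (rule closed_Collect_eq[OF contP continuous_on_const])
  have clAH: "closure A \<subseteq> H" using AH clH by (rule closure_minimal)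
  have clAsph: "closure A \<subseteq> gsphere \<Phi>" using Asph clsph by (rule closure_minimal)
  have SA: "S \<subseteq> A"
  proof
    fix s assume s: "s \<in> S"
    then have "s = grho \<Phi> s" using rho_fix[OF g] Ssph by (metis subsetD)
    moreover have "s \<in> K" using s unfolding K_def by (simp add: hull_inc)
    ultimately show "s \<in> A" unfolding A_def by blast
  qed
  have SclA: "S \<subseteq> closure A" using SA closure_subset by blast
  have sconv: "s_convex \<Phi> (closure A)"
    unfolding s_convex_def
  proof (intro conjI ballI)
    show "closure A \<noteq> {}" using SclA assms(4) by auto
    show "closure A \<subseteq> gsphere \<Phi>" by (rule clAsph)
    fix x y l assume x: "x \<in> closure A" and y: "y \<in> closure A" and l: "l \<in> {0..(1::real)}"
    define c where "c = (\<lambda>p::'a\<times>'a. l *\<^sub>R fst p + (1 - l) *\<^sub>R snd p)"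
    define gg where "gg = (\<lambda>p. (1 / \<Phi> (c p)) *\<^sub>R c p)"
    have cH: "c p \<in> H" if "p \<in> H \<times> H" for p
    proof -
      obtain a b where ab0: "p = (a, b)" by (cases p)
      have ab: "p = (a, b)" "a \<in> H" "b \<in> H" using that ab0 by auto
      have "l *\<^sub>R a + (1 - l) *\<^sub>R b \<in> H"
        by (rule convexD[OF convH ab(2,3)]) (use l in auto)
      then show ?thesis unfolding c_def ab(1) by simp
    qed
    have gg_eq: "gg p = grho \<Phi> (c p)" if "p \<in> H \<times> H" for p
      using cH[OF that] H0 unfolding gg_def grho_def by auto
    have contc: "continuous_on (H \<times> H) c" unfolding c_def by (intro continuous_intros)
    have contPc: "continuous_on (H \<times> H) (\<lambda>p. \<Phi> (c p))"
      by (rule continuous_on_compose2[OF contP contc]) auto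
    have nz: "\<forall>p\<in>H \<times> H. \<Phi> (c p) \<noteq> 0"
    proof
      fix p assume "p \<in> H \<times> H"
      then have "c p \<noteq> 0" using cH H0 by metis
      then show "\<Phi> (c p) \<noteq> 0" using g_pos[OF g] by (metis less_irrefl)
    qed
    have "continuous_on (H \<times> H) gg" unfolding gg_def
      by (rule continuous_on_scaleR[OF continuous_on_divide[OF continuous_on_const contPc nz] contc])
    moreover have "closure (A \<times> A) \<subseteq> H \<times> H" using clAH unfolding closure_Times by (rule Sigma_mono) (use clAH in auto)
    ultimately have cont2: "continuous_on (closure (A \<times> A)) gg" by (rule continuous_on_subset)
    have img: "gg ` (A \<times> A) \<subseteq> closure A"
    proof
      fix z assume "z \<in> gg ` (A \<times> A)"
      then obtain k k' where kk: "k \<in> K" "k' \<in> K" "z = gg (grho \<Phi> k, grho \<Phi> k')"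
        unfolding A_def by auto
      have inH: "(grho \<Phi> k, grho \<Phi> k') \<in> H \<times> H" using kk AH unfolding A_def by auto
      then have z: "z = grho \<Phi> (l *\<^sub>R grho \<Phi> k + (1 - l) *\<^sub>R grho \<Phi> k')"
        using gg_eq kk unfolding c_def by simp
      have "l *\<^sub>R grho \<Phi> k + (1 - l) *\<^sub>R grho \<Phi> k' \<noteq> 0"
        using cH[OF inH] H0 unfolding c_def by auto
      then have "z \<in> A" unfolding z A_def using comb_in[OF g convK K0 kk(1,2) l] by blast
      then show "z \<in> closure A" using closure_subset by blast
    qed
    have "gg ` closure (A \<times> A) \<subseteq> closure A"
      by (rule image_closure_subset[OF cont2 closed_closure img])
    moreover have xy: "(x, y) \<in> closure (A \<times> A)" using x y by (simp add: closure_Times)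
    ultimately have "gg (x, y) \<in> closure A" by blast
    moreover have "(x, y) \<in> H \<times> H" using x y clAH by auto
    ultimately show "s_comb \<Phi> l x y \<in> closure A"
      using gg_eq unfolding s_comb_def c_def by simp
  qed
  have mini: "closure A \<subseteq> C" if "C \<subseteq> gsphere \<Phi>" "closed C" "s_convex \<Phi> C" "S \<subseteq> C" for C
    using minimal[OF g that(3,4)] that(2) unfolding A_def K_def[symmetric]
    by (rule closure_minimal)
  have ha: "hull_addible \<Phi> S"
    unfolding hull_addible_def using assms(4) Ssph K0 unfolding K_def by simp
  have eqI: "closure A = \<Inter> {C. C \<subseteq> gsphere \<Phi> \<and> C \<noteq> {} \<and> closed C \<and> s_convex \<Phi> C \<and> S \<subseteq> C}"
  proof
    show "closure A \<subseteq> \<Inter> {C. C \<subseteq> gsphere \<Phi> \<and> C \<noteq> {} \<and> closed C \<and> s_convex \<Phi> C \<and> S \<subseteq> C}"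
      using mini by blast
    show "\<Inter> {C. C \<subseteq> gsphere \<Phi> \<and> C \<noteq> {} \<and> closed C \<and> s_convex \<Phi> C \<and> S \<subseteq> C} \<subseteq> closure A"
      using clAsph sconv SclA assms(4) by (intro Inter_lower) auto
  qed
  have clc: "closed (closure A)" by simp
  have mini': "\<forall>C. C \<subseteq> gsphere \<Phi> \<and> closed C \<and> s_convex \<Phi> C \<and> S \<subseteq> C \<longrightarrow> closure A \<subseteq> C"
    using mini by blast
  show ?thesis unfolding sco using ha eqI sconv SclA mini' clc by (intro conjI)
qed

end
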